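(* Let $G$ be a graph, let $\epsilon,\epsilon'$ be positive constants with $\epsilon+\epsilon'<1/2$, let $K$ be an $\epsilon$-almost-clique-like set of nodes, and let $k$ be an integer. Consider a $k$-bucketing of $K$ chosen uniformly at random (each $v\in K$ independently picks $t(v)\in[k]$ uniformly). Then for each $i\in[k]$, the probability that the $i$-th bucket fails to be $\epsilon'$-almost-clique-preserved is at most $2|K|\exp(-\epsilon'^2|K|/(6k))$.
   Context: $N(v)$ is the set of neighbors of $v$ in $G$. A set $K$ is $\epsilon$-almost-clique-like if $|N(v)\cap K|\ge(1-\epsilon)|K|$ for all $v\in K$. A $k$-bucketing of $K$ assigns $t(v)\in[k]$ to each $v\in K$, with buckets $T_j=\{v\in K:t(v)=j\}$. The $i$-th bucket $T_i$ is $\epsilon'$-almost-clique-preserved if for every $v\in K$, $(1-\epsilon')|N(v)\cap K|/k\le|N(v)\cap T_i|\le(1+\epsilon')|N(v)\cap K|/k$. *)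

theory Defs
  imports "HOL-Probability.Probability"
begin

definition nbrs :: "('a \<Rightarrow> 'a \<Rightarrow> bool) \<Rightarrow> 'a \<Rightarrow> 'a set" where
  "nbrs E v = {u. E v u}"

definition almost_clique_like :: "('a \<Rightarrow> 'a \<Rightarrow> bool) \<Rightarrow> real \<Rightarrow> 'a set \<Rightarrow> bool" where
  "almost_clique_like E eps K \<longleftrightarrow>
     (\<forall>v\<in>K. real (card (nbrs E v \<inter> K)) \<ge> (1 - eps) * real (card K))"

definition bucket :: "'a set \<Rightarrow> ('a \<Rightarrow> nat) \<Rightarrow> nat \<Rightarrow> 'a set" where
  "bucket K t j = {v\<in>K. t v = j}"

definition clique_preserved ::
  "('a \<Rightarrow> 'a \<Rightarrow> bool) \<Rightarrow> real \<Rightarrow> 'a set \<Rightarrow> nat \<Rightarrow> ('a \<Rightarrow> nat) \<Rightarrow> nat \<Rightarrow> bool" where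
  "clique_preserved E eps' K k t i \<longleftrightarrow>
     (\<forall>v\<in>K. (1 - eps') * real (card (nbrs E v \<inter> K)) / real k \<le> real (card (nbrs E v \<inter> bucket K t i))
          \<and> real (card (nbrs E v \<inter> bucket K t i)) \<le> (1 + eps') * real (card (nbrs E v \<inter> K)) / real k)"

text \<open>Uniformly random k-bucketing of K: each v in K independently picks t(v) uniformly
  from [k] = {1..k}; outside K the function is 0 (irrelevant).\<close>
definition random_bucketing :: "'a set \<Rightarrow> nat \<Rightarrow> ('a \<Rightarrow> nat) pmf" where
  "random_bucketing K k = Pi_pmf K 0 (\<lambda>_. pmf_of_set {1..k})"

end

theory Submission
  imports Defs
begin

lemma ln_lower_aux:
  fixes x :: real assumes "0 \<le> x"
  shows "2 * x / (2 + x) \<le> ln (1 + x)"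
proof -
  let ?f = "\<lambda>y::real. ln (1 + y) - 2 * y / (2 + y)"
  have "?f 0 \<le> ?f x"
  proof (rule DERIV_nonneg_imp_increasing_open[OF assms])
    fix y :: real assume y: "0 < y" "y < x"
    have "DERIV ?f y :> (1 / (1 + y) - (2 * (2 + y) - 2 * y) / (2 + y)^2)"
      using y by (auto intro!: derivative_eq_intros simp: power2_eq_square)
    moreover have "1 / (1 + y) - (2 * (2 + y) - 2 * y) / (2 + y)^2 \<ge> 0"
      using y by (simp add: field_simps power2_eq_square) (simp add: divide_le_eq_1 add_pos_pos)
    ultimately show "\<exists>d. DERIV ?f y :> d \<and> d \<ge> 0" by blast
  next
    show "continuous_on {0..x} ?f"
      by (intro continuous_intros) auto
  qed
  thus ?thesis by simp
qed

lemma exp_neg_upper: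
  fixes x :: real assumes "0 \<le> x"
  shows "exp (- x) \<le> 1 - x + x^2 / 2"
proof -
  let ?f = "\<lambda>y::real. 1 - y + y^2 / 2 - exp (- y)"
  have "?f 0 \<le> ?f x"
  proof (rule DERIV_nonneg_imp_increasing_open[OF assms])
    fix y :: real assume y: "0 < y" "y < x"
    have "DERIV ?f y :> (- 1 + y + exp (- y))"
      by (auto intro!: derivative_eq_intros)
    moreover have "- 1 + y + exp (- y) \<ge> 0"
      using exp_ge_add_one_self[of "-y"] by simp
    ultimately show "\<exists>d. DERIV ?f y :> d \<and> d \<ge> 0" by blast
  next
    show "continuous_on {0..x} ?f"
      by (intro continuous_intros) auto
  qed
  thus ?thesis by simp
qed

lemma mgf_bucket:
  fixes l :: real and k i :: nat
  assumes K: "finite K" and S: "S \<subseteq> K" and k: "k \<ge> 1" and i: "i \<in> {1..k}"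
  shows "measure_pmf.expectation (Pi_pmf K 0 (\<lambda>_. pmf_of_set {1..k}))
           (\<lambda>t. exp (l * real (card {u\<in>S. t u = i}))) = (1 + (exp l - 1) / k) ^ card S"
proof -
  define f where "f = (\<lambda>u (a::nat). if u \<in> S \<and> a = i then exp l else 1)"
  have eq: "exp (l * real (card {u\<in>S. t u = i})) = (\<Prod>u\<in>K. f u (t u))" for t :: "'a \<Rightarrow> nat"
  proof -
    have "(\<Prod>u\<in>K. f u (t u)) = (\<Prod>u\<in>{u\<in>K. u \<in> S \<and> t u = i}. exp l)"
      unfolding f_def using K by (subst prod.inter_filter) auto
    also have "{u\<in>K. u \<in> S \<and> t u = i} = {u\<in>S. t u = i}" using S by auto
    finally show ?thesis by (simp add: exp_of_nat_mult[symmetric] mult.commute)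
  qed
  have "measure_pmf.expectation (Pi_pmf K 0 (\<lambda>_. pmf_of_set {1..k}))
           (\<lambda>t. exp (l * real (card {u\<in>S. t u = i}))) =
        measure_pmf.expectation (Pi_pmf K 0 (\<lambda>_. pmf_of_set {1..k})) (\<lambda>t. \<Prod>u\<in>K. f u (t u))"
    by (simp add: eq)
  also have "\<dots> = (\<Prod>u\<in>K. measure_pmf.expectation (pmf_of_set {1..k}) (f u))"
    using K k by (intro expectation_prod_Pi_pmf) (auto simp: f_def intro!: integrable_measure_pmf_finite)
  also have "\<dots> = (\<Prod>u\<in>K. if u \<in> S then 1 + (exp l - 1) / k else 1)"
  proof (intro prod.cong refl)
    fix u assume "u \<in> K"
    have ne: "{1..k} \<noteq> {}" using k by auto
    show "measure_pmf.expectation (pmf_of_set {1..k}) (f u) = (if u \<in> S then 1 + (exp l - 1) / k else 1)"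
    proof (cases "u \<in> S")
      case True
      have "f u = (\<lambda>a. 1 + (if a = i then exp l - 1 else 0))" unfolding f_def using True by auto
      hence "sum (f u) {1..k} = real k + (exp l - 1)"
        using i by (simp add: sum.distrib)
      thus ?thesis using True ne k by (simp add: integral_pmf_of_set field_simps)
    next
      case False
      thus ?thesis using ne by (simp add: f_def integral_pmf_of_set)
    qed
  qed
  also have "\<dots> = (\<Prod>u\<in>S. 1 + (exp l - 1) / k)"
    proof -
    have "{x \<in> K. x \<in> S} = S" using S by auto
    thus ?thesis using K by (subst prod.inter_filter[symmetric]) auto
  qed
  finally show ?thesis by simp
qed

lemma tail_mgf:
  fixes l c :: real and k i :: nat
  assumes K: "finite K" and S: "S \<subseteq> K" and k: "k \<ge> 1" and i: "i \<in> {1..k}"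
  shows "measure_pmf.prob (Pi_pmf K 0 (\<lambda>_. pmf_of_set {1..k})) {t. c \<le> l * real (card {u\<in>S. t u = i})}
           \<le> exp (real (card S) / real k * (exp l - 1) - c)"
proof -
  let ?P = "Pi_pmf K 0 (\<lambda>_. pmf_of_set {1..k})"
  let ?X = "\<lambda>t. exp (l * real (card {u\<in>S. t u = i}))"
  have fin: "finite (set_pmf ?P)"
    using K k by (subst set_Pi_pmf) (auto intro!: finite_PiE_dflt)
  have "{t. c \<le> l * real (card {u\<in>S. t u = i})} = {t\<in>space (measure_pmf ?P). exp c \<le> ?X t}"
    by auto
  hence "measure_pmf.prob ?P {t. c \<le> l * real (card {u\<in>S. t u = i})}
      = measure_pmf.prob ?P {t\<in>space (measure_pmf ?P). exp c \<le> ?X t}" by simp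
  also have "\<dots> \<le> measure_pmf.expectation ?P ?X / exp c"
    by (intro integral_Markov_inequality_measure[where A = UNIV] integrable_measure_pmf_finite fin) auto
  also have "measure_pmf.expectation ?P ?X = (1 + (exp l - 1) / k) ^ card S"
    by (rule mgf_bucket[OF K S k i])
  also have "\<dots> \<le> exp ((exp l - 1) / k) ^ card S"
  proof (rule power_mono)
    show "1 + (exp l - 1) / real k \<le> exp ((exp l - 1) / real k)" by (rule exp_ge_add_one_self)
    have "(exp l - 1) / real k \<ge> -1 / real k" using k by (intro divide_right_mono) auto
    moreover have "-1 / real k \<ge> -1" using k by (simp add: field_simps)
    ultimately show "0 \<le> 1 + (exp l - 1) / real k" by linarith
  qed
  also have "\<dots> = exp (real (card S) / real k * (exp l - 1))"
    by (simp add: exp_of_nat_mult[symmetric])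
  finally show ?thesis by (simp add: exp_diff divide_right_mono)
qed

lemma vertex_bound:
  fixes \<delta> :: real and k i :: nat
  assumes K: "finite K" and S: "S \<subseteq> K" and k: "k \<ge> 1" and i: "i \<in> {1..k}"
    and d0: "0 < \<delta>" and d1: "\<delta> \<le> 1"
    and ln_aux: "2 * \<delta> / (2 + \<delta>) \<le> ln (1 + \<delta>)"
    and exp_aux: "exp (- \<delta>) \<le> 1 - \<delta> + \<delta>^2 / 2"
    and dS: "real (card S) \<ge> real (card K) / 2"
  shows "measure_pmf.prob (Pi_pmf K 0 (\<lambda>_. pmf_of_set {1..k}))
     {t. real (card {u\<in>S. t u = i}) < (1 - \<delta>) * real (card S) / real k \<or>
         real (card {u\<in>S. t u = i}) > (1 + \<delta>) * real (card S) / real k}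
     \<le> 2 * exp (- (\<delta>^2 * real (card K)) / (6 * real k))"
proof -
  let ?P = "Pi_pmf K 0 (\<lambda>_. pmf_of_set {1..k})"
  let ?X = "\<lambda>t. real (card {u\<in>S. t u = i})"
  define \<mu> where "\<mu> = real (card S) / real k"
  define B where "B = exp (- (\<delta>^2 * real (card K)) / (6 * real k))"
  have kpos: "real k > 0" using k by simp
  have \<mu>0: "\<mu> \<ge> 0" unfolding \<mu>_def by simp
  have \<mu>K: "\<mu> * \<delta>^2 / 3 \<ge> \<delta>^2 * real (card K) / (6 * real k)"
  proof -
    have "\<mu> \<ge> real (card K) / (2 * real k)" unfolding \<mu>_def using dS kpos
      by (simp add: field_simps)
    hence "\<mu> * \<delta>^2 \<ge> real (card K) / (2 * real k) * \<delta>^2" by (intro mult_right_mono) auto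
    thus ?thesis by (simp add: field_simps)
  qed
  have \<mu>K': "- (\<delta>^2 * real (card K)) / (6 * real k) \<ge> - (\<mu> * \<delta>^2 / 3)"
    using \<mu>K by (simp add: minus_divide_left[symmetric])
  define l where "l = ln (1 + \<delta>)"
  have l0: "l > 0" unfolding l_def using d0 by simp
  have lb: "l * (1 + \<delta>) \<ge> \<delta> + \<delta>^2 / 3"
  proof -
    have "l * (1 + \<delta>) \<ge> 2 * \<delta> / (2 + \<delta>) * (1 + \<delta>)"
      unfolding l_def using ln_aux d0 by (intro mult_right_mono) auto
    moreover have "2 * \<delta> / (2 + \<delta>) * (1 + \<delta>) \<ge> \<delta> + \<delta>^2 / 3"
    proof -
      have "(\<delta> + \<delta>^2 / 3) * (2 + \<delta>) \<le> 2 * \<delta> * (1 + \<delta>)"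
      proof -
        have "\<delta>^3 \<le> \<delta>^2" using d0 d1 by (simp add: power_decreasing)
        thus ?thesis by (simp add: algebra_simps power2_eq_square power3_eq_cube)
      qed
      thus ?thesis using d0 by (simp add: field_simps)
    qed
    ultimately show ?thesis by linarith
  qed
  have up: "measure_pmf.prob ?P {t. ?X t > (1 + \<delta>) * real (card S) / real k} \<le> B"
  proof -
    have "measure_pmf.prob ?P {t. ?X t > (1 + \<delta>) * real (card S) / real k}
        \<le> measure_pmf.prob ?P {t. l * ((1 + \<delta>) * \<mu>) \<le> l * ?X t}"
    proof (intro measure_pmf.finite_measure_mono subsetI)
      fix t assume "t \<in> {t. ?X t > (1 + \<delta>) * real (card S) / real k}"
      hence "(1 + \<delta>) * \<mu> \<le> ?X t" by (simp add: \<mu>_def)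
      hence "l * ((1 + \<delta>) * \<mu>) \<le> l * ?X t" using l0 by (intro mult_left_mono) auto
      thus "t \<in> {t. l * ((1 + \<delta>) * \<mu>) \<le> l * ?X t}" by simp
    qed auto
    also have "\<dots> \<le> exp (\<mu> * (exp l - 1) - l * ((1 + \<delta>) * \<mu>))"
      using tail_mgf[OF K S k i, of "l * ((1 + \<delta>) * \<mu>)" l] by (simp add: \<mu>_def)
    also have "\<dots> \<le> B" unfolding B_def
    proof (intro exp_mono)
      have "exp l - 1 = \<delta>" unfolding l_def using d0 by simp
      hence "\<mu> * (exp l - 1) - l * ((1 + \<delta>) * \<mu>) = \<mu> * (\<delta> - l * (1 + \<delta>))" by (simp add: algebra_simps)
      also have "\<dots> \<le> \<mu> * (- (\<delta>^2) / 3)" using lb \<mu>0 by (intro mult_left_mono) auto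
      finally show "\<mu> * (exp l - 1) - l * ((1 + \<delta>) * \<mu>) \<le> - (\<delta>^2 * real (card K)) / (6 * real k)"
        using \<mu>K by (simp add: field_simps)
    qed
    finally show ?thesis .
  qed
  have lo: "measure_pmf.prob ?P {t. ?X t < (1 - \<delta>) * real (card S) / real k} \<le> B"
  proof -
    have "measure_pmf.prob ?P {t. ?X t < (1 - \<delta>) * real (card S) / real k}
        \<le> measure_pmf.prob ?P {t. (- \<delta>) * ((1 - \<delta>) * \<mu>) \<le> (- \<delta>) * ?X t}"
    proof (intro measure_pmf.finite_measure_mono subsetI)
      fix t assume "t \<in> {t. ?X t < (1 - \<delta>) * real (card S) / real k}"
      hence "?X t \<le> (1 - \<delta>) * \<mu>" by (simp add: \<mu>_def)
      hence "\<delta> * ?X t \<le> \<delta> * ((1 - \<delta>) * \<mu>)" using d0 by (intro mult_left_mono) auto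
      thus "t \<in> {t. (- \<delta>) * ((1 - \<delta>) * \<mu>) \<le> (- \<delta>) * ?X t}" by simp
    qed auto
    also have "\<dots> \<le> exp (\<mu> * (exp (- \<delta>) - 1) - (- \<delta>) * ((1 - \<delta>) * \<mu>))"
      using tail_mgf[OF K S k i, of "(- \<delta>) * ((1 - \<delta>) * \<mu>)" "- \<delta>"] by (simp add: \<mu>_def)
    also have "\<dots> \<le> B" unfolding B_def
    proof (intro exp_mono)
      have "\<mu> * (exp (- \<delta>) - 1) \<le> \<mu> * (- \<delta> + \<delta>^2 / 2)"
        using exp_aux \<mu>0 by (intro mult_left_mono) auto
      hence "\<mu> * (exp (- \<delta>) - 1) - (- \<delta>) * ((1 - \<delta>) * \<mu>) \<le> - (\<mu> * \<delta>^2 / 2)"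
        by (simp add: algebra_simps power2_eq_square)
      moreover have "\<mu> * \<delta>^2 / 2 \<ge> \<mu> * \<delta>^2 / 3" using \<mu>0 by simp
      ultimately show "\<mu> * (exp (- \<delta>) - 1) - (- \<delta>) * ((1 - \<delta>) * \<mu>) \<le> - (\<delta>^2 * real (card K)) / (6 * real k)"
        using \<mu>K' by linarith
    qed
    finally show ?thesis .
  qed
  have "measure_pmf.prob ?P
     {t. ?X t < (1 - \<delta>) * real (card S) / real k \<or> ?X t > (1 + \<delta>) * real (card S) / real k}
     = measure_pmf.prob ?P ({t. ?X t < (1 - \<delta>) * real (card S) / real k} \<union> {t. ?X t > (1 + \<delta>) * real (card S) / real k})"
    by (simp add: Collect_disj_eq)
  also have "\<dots> \<le> measure_pmf.prob ?P {t. ?X t < (1 - \<delta>) * real (card S) / real k} + measure_pmf.prob ?P {t. ?X t > (1 + \<delta>) * real (card S) / real k}"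
    by (rule measure_Un_le) auto
  also have "\<dots> \<le> 2 * B" using up lo by simp
  finally show ?thesis unfolding B_def .
qed


theorem lemma4p7:
  fixes E :: "'a \<Rightarrow> 'a \<Rightarrow> bool" and K :: "'a set" and eps eps' :: real and k i :: nat
  assumes "\<And>u v. E u v \<Longrightarrow> E v u"
    and "\<And>v. \<not> E v v"
    and "finite K"
    and "eps > 0" and "eps' > 0" and "eps + eps' < 1/2"
    and "almost_clique_like E eps K"
    and "k \<ge> 1"
    and "i \<in> {1..k}"
  shows "measure_pmf.prob (random_bucketing K k) {t. \<not> clique_preserved E eps' K k t i}
           \<le> 2 * real (card K) * exp (- (eps'^2 * real (card K)) / (6 * real k))"
proof -
  let ?P = "Pi_pmf K 0 (\<lambda>_. pmf_of_set {1..k})"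
  let ?X = "\<lambda>v t. real (card {u\<in>nbrs E v \<inter> K. t u = i})"
  define A where "A = (\<lambda>v. {t. ?X v t < (1 - eps') * real (card (nbrs E v \<inter> K)) / real k \<or>
         ?X v t > (1 + eps') * real (card (nbrs E v \<inter> K)) / real k})"
  define B where "B = 2 * exp (- (eps'^2 * real (card K)) / (6 * real k))"
  have eqc: "nbrs E v \<inter> bucket K t i = {u\<in>nbrs E v \<inter> K. t u = i}" for v t
    unfolding bucket_def by auto
  have sub: "{t. \<not> clique_preserved E eps' K k t i} \<subseteq> (\<Union>v\<in>K. A v)"
    unfolding clique_preserved_def A_def eqc by (auto simp: not_le)
  have bnd: "measure_pmf.prob ?P (A v) \<le> B" if v: "v \<in> K" for v
    unfolding A_def B_def
  proof (rule vertex_bound)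
    show "finite K" "nbrs E v \<inter> K \<subseteq> K" "1 \<le> k" "i \<in> {1..k}" "0 < eps'" "eps' \<le> 1"
      using assms by auto
    show "2 * eps' / (2 + eps') \<le> ln (1 + eps')" using assms by (intro ln_lower_aux) auto
    show "exp (- eps') \<le> 1 - eps' + eps'^2 / 2" using assms by (intro exp_neg_upper) auto
    have "real (card (nbrs E v \<inter> K)) \<ge> (1 - eps) * real (card K)"
      using assms(7) v unfolding almost_clique_like_def by auto
    moreover have "(1 - eps) * real (card K) \<ge> real (card K) / 2"
    proof -
      have "(1 - eps) * real (card K) \<ge> (1/2) * real (card K)"
        using assms by (intro mult_right_mono) auto
      thus ?thesis by simp
    qed
    ultimately show "real (card K) / 2 \<le> real (card (nbrs E v \<inter> K))" by linarith
  qed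
  have "measure_pmf.prob (random_bucketing K k) {t. \<not> clique_preserved E eps' K k t i}
      \<le> measure_pmf.prob ?P (\<Union>v\<in>K. A v)"
    unfolding random_bucketing_def by (intro measure_pmf.finite_measure_mono sub) auto
  also have "\<dots> \<le> (\<Sum>v\<in>K. measure_pmf.prob ?P (A v))"
    using assms(3) by (intro measure_pmf.finite_measure_subadditive_finite) auto
  also have "\<dots> \<le> (\<Sum>v\<in>K. B)" using bnd by (intro sum_mono) auto
  also have "\<dots> = 2 * real (card K) * exp (- (eps'^2 * real (card K)) / (6 * real k))"
    by (simp add: B_def)
  finally show ?thesis .
qed

end
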